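(* Let $(W,S)$ be a hyperbolic reflection group in $\mathbb{H}^n$ with a convex polytope $P$ as fundamental domain, and let $R$ be its set of reflections. Then the set $\mathcal{H}_\infty=\{\gamma(\infty)\mid \gamma\subseteq H_r\text{ a geodesic ray},\ r\in R\}$ is dense in $\partial\mathbb{H}^n$.
   Context: $(W,S)$ is a discrete group generated by the set $S$ of reflections across the walls of a Coxeter polyhedron $P$ (a convex polyhedron whose intersecting bounding hyperplanes meet at dihedral angles that are submultiples of $\pi$), with $P$ a strict fundamental domain, and whose Coxeter system does not split as a direct product of spherical and affine reflection groups. A convex polytope (possibly with ideal vertices) is, in the hyperboloid model $\mathbb{H}^n\subseteq\mathbb{R}^{n,1}$, the intersection of $\mathbb{H}^n$ with a convex polyhedral cone contained in $\{v\mid\langle v|v\rangle\le0,\ v_{n+1}>0\}$. $R=\{wsw^{-1}\mid w\in W,s\in S\}$ and $H_r$ is the hyperplane fixed by $r$. $\partial\mathbb{H}^n$ is the visual boundary with the cone topology and $\gamma(\infty)$ the endpoint of a ray $\gamma$. *)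

theory Defs
  imports "HOL-Analysis.Analysis"
begin

text \<open>Minkowski space R^{n,1} is modelled as 'a \<times> real with 'a a Euclidean space
  of dimension n; the last coordinate (snd) is v_{n+1}.\<close>

definition lor :: "('a::euclidean_space \<times> real) \<Rightarrow> ('a \<times> real) \<Rightarrow> real" where
  "lor v w = fst v \<bullet> fst w - snd v * snd w"

definition hyp :: "('a::euclidean_space \<times> real) set" where
  "hyp = {v. lor v v = -1 \<and> snd v > 0}"

definition lrefl :: "('a::euclidean_space \<times> real) \<Rightarrow> ('a \<times> real) \<Rightarrow> ('a \<times> real)" where
  "lrefl e v = v - (2 * lor e v / lor e e) *\<^sub>R e"

definition polyhedron :: "('a::euclidean_space \<times> real) set \<Rightarrow> ('a \<times> real) set" where
  "polyhedron E = hyp \<inter> {v. \<forall>e\<in>E. lor e v \<le> 0}"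

text \<open>E is a finite irredundant family of outward wall normals of a convex polytope
  (possibly with ideal vertices): the polyhedral cone lies in the closed future light cone,
  and every hyperplane e^perp carries a genuine facet.\<close>
definition polytope_normals :: "('a::euclidean_space \<times> real) set \<Rightarrow> bool" where
  "polytope_normals E \<longleftrightarrow> finite E \<and> (\<forall>e\<in>E. lor e e > 0)
     \<and> {v. \<forall>e\<in>E. lor e v \<le> 0} - {0} \<subseteq> {v. lor v v \<le> 0 \<and> snd v > 0}
     \<and> (\<forall>e\<in>E. \<exists>p\<in>hyp. lor e p = 0 \<and> (\<forall>e'\<in>E - {e}. lor e' p < 0))"

definition coxeter_angles :: "('a::euclidean_space \<times> real) set \<Rightarrow> bool" where
  "coxeter_angles E \<longleftrightarrow> (\<forall>e\<in>E. \<forall>f\<in>E. e \<noteq> f \<longrightarrow>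
      (\<exists>p\<in>hyp. lor e p = 0 \<and> lor f p = 0) \<longrightarrow>
      (\<exists>m::nat. m \<ge> 2 \<and> lor e f = - cos (pi / real m) * sqrt (lor e e) * sqrt (lor f f)))"

inductive_set refl_group :: "('a::euclidean_space \<times> real) set \<Rightarrow> (('a \<times> real) \<Rightarrow> ('a \<times> real)) set"
  for E where
  id_in: "id \<in> refl_group E"
| step: "w \<in> refl_group E \<Longrightarrow> e \<in> E \<Longrightarrow> lrefl e \<circ> w \<in> refl_group E"

definition reflections :: "('a::euclidean_space \<times> real) set \<Rightarrow> (('a \<times> real) \<Rightarrow> ('a \<times> real)) set" where
  "reflections E = {w \<circ> lrefl e \<circ> inv w | w e. w \<in> refl_group E \<and> e \<in> E}"

definition fix_hyperplane :: "(('a::euclidean_space \<times> real) \<Rightarrow> ('a \<times> real)) \<Rightarrow> ('a \<times> real) set" where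
  "fix_hyperplane r = {p \<in> hyp. r p = p}"

definition discrete_action :: "(('a::euclidean_space \<times> real) \<Rightarrow> ('a \<times> real)) set \<Rightarrow> bool" where
  "discrete_action W \<longleftrightarrow> (\<forall>K. compact K \<and> K \<subseteq> hyp \<longrightarrow> finite {w\<in>W. w ` K \<inter> K \<noteq> {}})"

definition strict_fundamental_domain ::
  "(('a::euclidean_space \<times> real) \<Rightarrow> ('a \<times> real)) set \<Rightarrow> ('a \<times> real) set \<Rightarrow> bool" where
  "strict_fundamental_domain W P \<longleftrightarrow> P \<subseteq> hyp \<and> (\<forall>p\<in>hyp. \<exists>!q\<in>P. \<exists>w\<in>W. w p = q)"

definition geodesic_ray :: "(real \<Rightarrow> ('a::euclidean_space \<times> real)) \<Rightarrow> bool" where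
  "geodesic_ray \<gamma> \<longleftrightarrow> (\<exists>p u. p \<in> hyp \<and> lor p u = 0 \<and> lor u u = 1 \<and>
       (\<forall>t\<ge>0. \<gamma> t = cosh t *\<^sub>R p + sinh t *\<^sub>R u))"

text \<open>The visual boundary, identified (homeomorphically for the cone topology) with the
  sphere of null vectors with last coordinate 1, with its Euclidean topology.\<close>
definition ideal_boundary :: "('a::euclidean_space \<times> real) set" where
  "ideal_boundary = {v. lor v v = 0 \<and> snd v = 1}"

definition ray_end :: "(real \<Rightarrow> ('a::euclidean_space \<times> real)) \<Rightarrow> ('a \<times> real)" where
  "ray_end \<gamma> = Lim at_top (\<lambda>t. (1 / snd (\<gamma> t)) *\<^sub>R \<gamma> t)"

end

theory Submission
  imports Defs "HOL-Real_Asymp.Real_Asymp"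
begin


lemma lor_sym: "lor x y = lor y x"
  by (simp add: lor_def inner_commute mult.commute)
lemma lor_add_left[simp]: "lor (x + y) z = lor x z + lor y z"
  by (simp add: lor_def inner_add_left algebra_simps)
lemma lor_add_right[simp]: "lor z (x + y) = lor z x + lor z y"
  by (simp add: lor_def inner_add_right algebra_simps)
lemma lor_diff_left[simp]: "lor (x - y) z = lor x z - lor y z"
  by (simp add: lor_def inner_diff_left algebra_simps)
lemma lor_diff_right[simp]: "lor z (x - y) = lor z x - lor z y"
  by (simp add: lor_def inner_diff_right algebra_simps)
lemma lor_scale_left[simp]: "lor (c *\<^sub>R x) z = c * lor x z"
  by (simp add: lor_def algebra_simps)
lemma lor_scale_right[simp]: "lor z (c *\<^sub>R x) = c * lor z x"
  by (simp add: lor_def algebra_simps)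
lemma lor_minus_left[simp]: "lor (- x) z = - lor x z"
  by (simp add: lor_def)
lemma lor_minus_right[simp]: "lor z (- x) = - lor z x"
  by (simp add: lor_def)
lemma lor_zero_left[simp]: "lor 0 z = 0" by (simp add: lor_def)
lemma lor_zero_right[simp]: "lor z 0 = 0" by (simp add: lor_def)

lemma lrefl_lor:
  assumes "lor e e \<noteq> 0" shows "lor (lrefl e x) (lrefl e y) = lor x y"
  using assms by (simp add: lrefl_def lor_sym[of x e] lor_sym[of y e] field_simps)

lemma lor_e_lrefl:
  assumes "lor e e \<noteq> 0" shows "lor e (lrefl e x) = - lor e x"
  using assms by (simp add: lrefl_def field_simps)

lemma lrefl_invol:
  assumes "lor e e \<noteq> 0" shows "lrefl e (lrefl e x) = x"
proof -
  have "lrefl e (lrefl e x) = lrefl e x - (2 * lor e (lrefl e x) / lor e e) *\<^sub>R e"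
    by (simp add: lrefl_def)
  also have "\<dots> = x" using assms by (simp add: lor_e_lrefl lrefl_def algebra_simps)
  finally show ?thesis .
qed

lemma lrefl_bij: assumes "lor e e \<noteq> 0" shows "bij (lrefl e)"
  by (rule o_bij[of "lrefl e"]) (auto simp: lrefl_invol[OF assms])

lemma lrefl_zero[simp]: "lrefl e 0 = 0" by (simp add: lrefl_def)

lemma hyp_norm_lt:
  assumes "v \<in> hyp" shows "norm (fst v) < snd v"
proof -
  have h: "fst v \<bullet> fst v = snd v * snd v - 1" "snd v > 0" using assms by (auto simp: hyp_def lor_def)
  have "norm (fst v) ^ 2 < snd v ^ 2" using h power2_norm_eq_inner[of "fst v"] by (simp add: power2_eq_square)
  then show ?thesis by (rule power2_less_imp_less) (use h in simp)
qed

lemma timelike_same_sheet: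
  assumes "p \<in> hyp" "lor q q = -1" "lor p q < 0" shows "snd q > 0"
proof (rule ccontr)
  assume "\<not> snd q > 0"
  have q: "fst q \<bullet> fst q = snd q * snd q - 1" using assms(2) by (simp add: lor_def)
  have sq: "norm (fst q) ^ 2 < snd q ^ 2" using q power2_norm_eq_inner[of "fst q"] by (simp add: power2_eq_square)
  have nq: "norm (fst q) < - snd q"
  proof (rule power2_less_imp_less)
    show "norm (fst q)^2 < (- snd q)^2" using sq by simp
    show "0 \<le> - snd q" using \<open>\<not> snd q > 0\<close> by simp
  qed
  have np: "norm (fst p) < snd p" by (rule hyp_norm_lt[OF assms(1)])
  have "fst p \<bullet> fst q \<ge> - (norm (fst p) * norm (fst q))"
    using norm_cauchy_schwarz[of "- fst p" "fst q"] by simp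
  moreover have "norm (fst p) * norm (fst q) < snd p * (- snd q)"
    using mult_strict_mono[OF np nq] assms(1) by (simp add: hyp_def)
  moreover have "snd p * (- snd q) = -(snd p * snd q)" by simp
  ultimately have "lor p q > 0" unfolding lor_def by linarith
  then show False using assms(3) by simp
qed

lemma lrefl_hyp:
  assumes "lor e e > 0" "p \<in> hyp" shows "lrefl e p \<in> hyp"
proof -
  have L: "lor (lrefl e p) (lrefl e p) = -1" using lrefl_lor[of e p p] assms by (simp add: hyp_def)
  have c: "lor p (lrefl e p) = -1 - 2 * (lor e p)^2 / lor e e"
    using assms by (simp add: lrefl_def hyp_def lor_sym[of p e] power2_eq_square)
  have "2 * (lor e p)^2 / lor e e \<ge> 0" using assms(1) by simp
  then have n: "lor p (lrefl e p) < 0" using c by linarith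
  have "snd (lrefl e p) > 0" by (rule timelike_same_sheet[OF assms(2) L n])
  then show ?thesis using L by (simp add: hyp_def)
qed

lemma W_props:
  assumes "w \<in> refl_group E" "\<forall>e\<in>E. lor e e > 0"
  shows "bij w \<and> (\<forall>x y. lor (w x) (w y) = lor x y) \<and> w ` hyp \<subseteq> hyp \<and> w 0 = 0"
  using assms(1)
proof induction
  case id_in then show ?case by (auto simp: bij_def inj_on_def)
next
  case (step w e)
  have ee: "lor e e > 0" using step assms(2) by auto
  have b: "bij (lrefl e \<circ> w)" using step ee by (intro bij_comp lrefl_bij) auto
  have i: "\<forall>x y. lor ((lrefl e \<circ> w) x) ((lrefl e \<circ> w) y) = lor x y"
  proof (intro allI)
    fix x y
    have "lor ((lrefl e \<circ> w) x) ((lrefl e \<circ> w) y) = lor (w x) (w y)"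
      unfolding comp_def by (rule lrefl_lor) (use ee in simp)
    also have "\<dots> = lor x y" using step by blast
    finally show "lor ((lrefl e \<circ> w) x) ((lrefl e \<circ> w) y) = lor x y" .
  qed
  have h: "(lrefl e \<circ> w) ` hyp \<subseteq> hyp"
  proof
    fix q assume "q \<in> (lrefl e \<circ> w) ` hyp"
    then obtain x where x: "x \<in> hyp" "q = lrefl e (w x)" by auto
    have "w x \<in> hyp" using step x(1) by blast
    then show "q \<in> hyp" using x(2) lrefl_hyp[OF ee] by simp
  qed
  have z: "(lrefl e \<circ> w) 0 = 0" using step by simp
  show ?case using b i h z by blast
qed

lemma W_comp_right:
  assumes "w \<in> refl_group E" "s \<in> E" shows "w \<circ> lrefl s \<in> refl_group E"
  using assms(1)
proof induction
  case id_in
  have "lrefl s \<circ> id \<in> refl_group E" by (rule refl_group.step[OF refl_group.id_in assms(2)])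
  then show ?case by simp
next
  case (step w e)
  then show ?case using refl_group.step[OF step(3) step(2)] by (metis o_assoc)
qed

lemma W_inv:
  assumes "w \<in> refl_group E" "\<forall>e\<in>E. lor e e > 0" shows "inv w \<in> refl_group E"
  using assms(1)
proof induction
  case id_in then show ?case by (subst inv_id) (rule refl_group.id_in)
next
  case (step w e)
  have ee: "lor e e \<noteq> 0" using step assms(2) by auto
  have bw: "bij w" using W_props[OF step(1) assms(2)] by simp
  have "inv (lrefl e \<circ> w) = inv w \<circ> inv (lrefl e)"
    by (rule o_inv_distrib[OF lrefl_bij[OF ee] bw])
  moreover have "inv (lrefl e) = lrefl e"
    by (rule inv_unique_comp) (auto simp: lrefl_invol[OF ee])
  ultimately have "inv (lrefl e \<circ> w) = inv w \<circ> lrefl e" by simp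
  then show ?case using W_comp_right[OF step(3) step(2)] by (simp only:)
qed




lemma ray_end_calc:
  assumes "\<alpha> > 0" "snd l = 1"
  shows "ray_end (\<lambda>t. cosh t *\<^sub>R v + sinh t *\<^sub>R ((1/\<alpha>) *\<^sub>R l - v)) = l"
proof -
  define \<gamma> where "\<gamma> = (\<lambda>t. cosh t *\<^sub>R v + sinh t *\<^sub>R ((1/\<alpha>) *\<^sub>R l - v))"
  define g where "g = (\<lambda>t. (1 / snd (\<gamma> t)) *\<^sub>R \<gamma> t)"
  define k where "k t = \<alpha> * (exp (-t) / sinh t)" for t :: real
  define h where "h = (\<lambda>t. (1 / (k t * snd v + 1)) *\<^sub>R (k t *\<^sub>R v + l))"
  have k0: "(k \<longlongrightarrow> 0) at_top" unfolding k_def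
    by (rule tendsto_mult_right_zero) real_asymp
  have ev: "eventually (\<lambda>t. h t = g t) at_top"
    using eventually_gt_at_top[of 0]
  proof eventually_elim
    case (elim t)
    have st: "sinh t > 0" using elim by simp
    have g: "\<gamma> t = (sinh t / \<alpha>) *\<^sub>R (k t *\<^sub>R v + l)"
    proof -
      have "\<gamma> t = (cosh t - sinh t) *\<^sub>R v + (sinh t / \<alpha>) *\<^sub>R l"
        unfolding \<gamma>_def by (simp add: algebra_simps)
      also have "\<dots> = (sinh t / \<alpha>) *\<^sub>R (k t *\<^sub>R v + l)"
        using st assms(1) by (simp add: cosh_minus_sinh k_def scaleR_add_right)
      finally show ?thesis .
    qed
    have s: "snd (\<gamma> t) = (sinh t / \<alpha>) * (k t * snd v + 1)"
      using assms(2) g by simp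
    show ?case unfolding g_def h_def s unfolding g using st assms(1) by simp
  qed
  have "(h \<longlongrightarrow> (1 / (0 * snd v + 1)) *\<^sub>R (0 *\<^sub>R v + l)) at_top"
    unfolding h_def by (intro tendsto_intros k0) auto
  then have "(h \<longlongrightarrow> l) at_top" by simp
  then have "(g \<longlongrightarrow> l) at_top" by (rule Lim_transform_eventually[OF _ ev])
  then have "Lim at_top g = l" by (intro tendsto_Lim) auto
  then show ?thesis unfolding ray_end_def g_def \<gamma>_def .
qed

lemma fix_lemma:
  assumes "w \<in> refl_group E" "\<forall>e\<in>E. lor e e > 0" "e \<in> E" "p \<in> hyp" "lor (w e) p = 0"
  shows "p \<in> fix_hyperplane (w \<circ> lrefl e \<circ> inv w)"
proof -
  have P: "bij w" "\<forall>x y. lor (w x) (w y) = lor x y" using W_props[OF assms(1,2)] by auto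
  define q where "q = inv w p"
  have wq: "w q = p" unfolding q_def using P(1) by (simp add: bij_is_surj surj_f_inv_f)
  have "lor e q = 0" using P(2) assms(5) wq by metis
  then have "lrefl e q = q" by (simp add: lrefl_def)
  then show ?thesis using assms(4) wq by (simp add: fix_hyperplane_def q_def)
qed

lemma K:
  assumes pn: "polytope_normals E" and w: "w \<in> refl_group E" and e: "e \<in> E"
    and l: "l \<in> ideal_boundary" and lo: "lor (w e) l = 0"
  shows "l \<in> {ray_end \<gamma> | \<gamma> r. r \<in> reflections E \<and> geodesic_ray \<gamma> \<and>
                            (\<forall>t\<ge>0. \<gamma> t \<in> fix_hyperplane r)}"
proof -
  have Epos: "\<forall>e\<in>E. lor e e > 0" using pn by (simp add: polytope_normals_def)
  obtain p where p: "p \<in> hyp" "lor e p = 0" using pn e by (auto simp: polytope_normals_def)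
  have WP: "bij w" "\<forall>x y. lor (w x) (w y) = lor x y" "w ` hyp \<subseteq> hyp" using W_props[OF w Epos] by auto
  define v where "v = w p"
  have v: "v \<in> hyp" using WP(3) p(1) v_def by auto
  have wev: "lor (w e) v = 0" using WP(2) p(2) v_def by metis
  have ll: "lor l l = 0" "snd l = 1" using l by (auto simp: ideal_boundary_def)
  have nl: "norm (fst l) = 1"
  proof -
    have "fst l \<bullet> fst l = 1" using ll by (simp add: lor_def)
    then show ?thesis by (simp add: norm_eq_sqrt_inner)
  qed
  have vv: "lor v v = -1" "snd v > 0" using v by (auto simp: hyp_def)
  have "fst v \<bullet> fst l \<le> norm (fst v) * norm (fst l)" by (rule norm_cauchy_schwarz)
  then have "fst v \<bullet> fst l < snd v" using hyp_norm_lt[OF v] nl by simp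
  then have vl: "lor v l < 0" using ll by (simp add: lor_def)
  define \<alpha> where "\<alpha> = - lor v l"
  have a0: "\<alpha> > 0" using vl \<alpha>_def by simp
  define u where "u = (1/\<alpha>) *\<^sub>R l - v"
  define \<gamma> where "\<gamma> = (\<lambda>t::real. cosh t *\<^sub>R v + sinh t *\<^sub>R u)"
  have vu: "lor v u = 0" using a0 vv unfolding u_def \<alpha>_def by simp
  have uu: "lor u u = 1" using a0 vv ll unfolding u_def \<alpha>_def by (simp add: lor_sym[of l v] field_simps)
  have geo: "geodesic_ray \<gamma>" unfolding geodesic_ray_def \<gamma>_def
    by (intro exI[of _ v] exI[of _ u]) (use v vu uu in simp)
  have weu: "lor (w e) u = 0" using wev lo unfolding u_def by simp
  have fx: "\<gamma> t \<in> fix_hyperplane (w \<circ> lrefl e \<circ> inv w)" if t: "t \<ge> 0" for t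
  proof (rule fix_lemma[OF w Epos e])
    have "lor (\<gamma> t) (\<gamma> t) = cosh t ^ 2 * lor v v + 2 * cosh t * sinh t * lor v u + sinh t ^ 2 * lor u u"
      unfolding \<gamma>_def by (simp add: lor_sym[of u v] power2_eq_square algebra_simps)
    also have "\<dots> = -1" using vv vu uu cosh_square_eq[of t] by simp
    finally have L: "lor (\<gamma> t) (\<gamma> t) = -1" .
    have "snd (\<gamma> t) = (cosh t - sinh t) * snd v + sinh t / \<alpha>"
      unfolding \<gamma>_def u_def using ll by (simp add: algebra_simps)
    also have "\<dots> > 0" using vv(2) a0 t by (simp add: cosh_minus_sinh add_pos_nonneg)
    finally show "\<gamma> t \<in> hyp" using L by (simp add: hyp_def)
    show "lor (w e) (\<gamma> t) = 0" unfolding \<gamma>_def using wev weu by simp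
  qed
  have re: "ray_end \<gamma> = l" unfolding \<gamma>_def u_def by (rule ray_end_calc[OF a0 ll(2)])
  have "w \<circ> lrefl e \<circ> inv w \<in> reflections E" unfolding reflections_def using w e by blast
  then have "\<exists>\<gamma>' r. l = ray_end \<gamma>' \<and> r \<in> reflections E \<and> geodesic_ray \<gamma>' \<and> (\<forall>t\<ge>0. \<gamma>' t \<in> fix_hyperplane r)"
    using geo fx re by (intro exI[of _ \<gamma>] exI[of _ "w \<circ> lrefl e \<circ> inv w"]) simp
  then show ?thesis by simp
qed



lemma caseA_geom:
  fixes a y :: "'a::euclidean_space"
  assumes "DIM('a) \<ge> 2" "a \<noteq> 0" "a \<bullet> y = \<beta>" "norm y < 1"
  shows "\<exists>z. norm z = 1 \<and> a \<bullet> z = \<beta> \<and> (norm (z - y))^2 \<le> 1 - (norm y)^2"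
proof -
  define c where "c = (\<beta> / (a \<bullet> a)) *\<^sub>R a"
  define d where "d = y - c"
  have aa: "a \<bullet> a > 0" using assms(2) by simp
  have ac: "a \<bullet> c = \<beta>" using aa unfolding c_def by simp
  have ad: "a \<bullet> d = 0" using ac assms(3) unfolding d_def by (simp add: inner_diff_right)
  have cd: "c \<bullet> d = 0" using ad unfolding c_def by simp
  have yy: "y \<bullet> y = c \<bullet> c + d \<bullet> d"
  proof -
    have "y = c + d" unfolding d_def by simp
    then have "y \<bullet> y = c \<bullet> c + 2 * (c \<bullet> d) + d \<bullet> d"
      by (simp add: inner_add_left inner_add_right inner_commute)
    then show ?thesis using cd by simp
  qed
  have ny: "y \<bullet> y < 1" using assms(4) by (simp add: dot_square_norm abs_square_less_1)
  have ny2: "y \<bullet> y = (norm y)^2" by (simp add: dot_square_norm)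
  define \<rho> where "\<rho> = sqrt (1 - c \<bullet> c)"
  have pos: "1 - c \<bullet> c > 0" using yy ny by (smt (verit) inner_ge_zero)
  have rho2: "\<rho>^2 = 1 - c \<bullet> c" unfolding \<rho>_def by (rule real_sqrt_pow2) (use pos in linarith)
  have rho0: "\<rho> \<ge> 0" unfolding \<rho>_def by (rule real_sqrt_ge_zero) (use pos in linarith)
  obtain t where t: "t \<bullet> t = 1" "a \<bullet> t = 0" "t \<bullet> d = norm d"
  proof (cases "d = 0")
    case True
    obtain y0 where y0: "y0 \<noteq> 0" "orthogonal a y0" using orthogonal_to_vector_exists[OF assms(1)] by blast
    define t where "t = (1 / norm y0) *\<^sub>R y0"
    have "t \<bullet> t = 1" unfolding t_def using y0(1)
      by (simp add: dot_square_norm power2_eq_square)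
    moreover have "a \<bullet> t = 0" using y0(2) unfolding t_def orthogonal_def by simp
    moreover have "t \<bullet> d = norm d" using True by simp
    ultimately show ?thesis using that by blast
  next
    case False
    define t where "t = (1 / norm d) *\<^sub>R d"
    have "t \<bullet> t = 1" unfolding t_def using False
      by (simp add: dot_square_norm power2_eq_square)
    moreover have "a \<bullet> t = 0" using ad unfolding t_def by simp
    moreover have "t \<bullet> d = norm d" unfolding t_def using False
      by (simp add: dot_square_norm power2_eq_square)
    ultimately show ?thesis using that by blast
  qed
  have ct: "c \<bullet> t = 0" using t(2) unfolding c_def by simp
  define z where "z = c + \<rho> *\<^sub>R t"
  have zz: "z \<bullet> z = 1"
  proof -
    have "z \<bullet> z = c \<bullet> c + 2 * \<rho> * (c \<bullet> t) + \<rho>^2 * (t \<bullet> t)"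
      unfolding z_def by (simp add: inner_add_left inner_add_right inner_commute power2_eq_square algebra_simps)
    then show ?thesis using ct t(1) rho2 by simp
  qed
  have az: "a \<bullet> z = \<beta>" unfolding z_def using ac t(2) by (simp add: inner_add_right)
  have dd: "d \<bullet> d = (norm d)^2" by (simp add: dot_square_norm)
  have nd: "norm d \<le> \<rho>"
  proof -
    have "(norm d)^2 \<le> \<rho>^2" using rho2 yy ny dd by (smt (verit) inner_ge_zero)
    then show ?thesis using rho0 by (rule power2_le_imp_le)
  qed
  have zy: "z - y = \<rho> *\<^sub>R t - d" unfolding z_def d_def by simp
  have "(norm (z - y))^2 = (\<rho> *\<^sub>R t - d) \<bullet> (\<rho> *\<^sub>R t - d)" unfolding zy by (simp add: dot_square_norm)
  also have "(\<rho> *\<^sub>R t - d) \<bullet> (\<rho> *\<^sub>R t - d) = \<rho>^2 * (t \<bullet> t) - 2 * \<rho> * (t \<bullet> d) + d \<bullet> d"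
    by (simp add: inner_diff_left inner_diff_right inner_commute power2_eq_square algebra_simps)
  also have "\<dots> = \<rho>^2 - 2 * \<rho> * norm d + (norm d)^2" using t dd by simp
  also have "\<dots> \<le> \<rho>^2 - (norm d)^2"
  proof -
    have "norm d * norm d \<le> \<rho> * norm d" using nd by (simp add: mult_right_mono)
    then show ?thesis by (simp add: power2_eq_square)
  qed
  also have "\<dots> = 1 - (norm y)^2" using rho2 yy dd ny2 by simp
  finally have "(norm (z - y))^2 \<le> 1 - (norm y)^2" .
  moreover have "norm z = 1" using zz by (simp add: norm_eq_sqrt_inner)
  ultimately show ?thesis using az by blast
qed

lemma null_wall:
  assumes fin: "finite E" and le: "\<forall>e\<in>E. lor e c \<le> 0" and c0: "c \<noteq> 0" and cc: "lor c c = 0"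
    and cone: "{v. \<forall>e\<in>E. lor e v \<le> 0} - {0} \<subseteq> {v. lor v v \<le> 0 \<and> snd v > 0}"
  shows "\<exists>e\<in>E. lor e c = 0"
proof (rule ccontr)
  assume "\<not> (\<exists>e\<in>E. lor e c = 0)"
  then have lt: "\<forall>e\<in>E. lor e c < 0" using le by force
  define m where "m = (fst c, - snd c)"
  have cm: "lor c m > 0"
  proof -
    have "lor c m = fst c \<bullet> fst c + snd c * snd c" unfolding m_def lor_def by simp
    moreover have "fst c \<noteq> 0 \<or> snd c \<noteq> 0" using c0 by (metis prod.collapse zero_prod_def)
    ultimately show ?thesis by (smt (verit) inner_gt_zero_iff inner_ge_zero zero_less_mult_iff mult_nonneg_nonneg)
  qed
  define B where "B = lor c m / (\<bar>lor m m\<bar> + 1)"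
  have B0: "B > 0" unfolding B_def using cm by simp
  have ev1: "eventually (\<lambda>t. \<forall>e\<in>E. lor e (c + t *\<^sub>R m) < 0) (at_right (0::real))"
  proof (rule eventually_ball_finite[OF fin], intro ballI)
    fix e assume e: "e \<in> E"
    have "((\<lambda>t. lor e c + t * lor e m) \<longlongrightarrow> lor e c + 0 * lor e m) (at_right (0::real))"
      by (intro tendsto_intros)
    then have "((\<lambda>t. lor e c + t * lor e m) \<longlongrightarrow> lor e c) (at_right (0::real))" by simp
    from order_tendstoD(2)[OF this] lt e
    show "eventually (\<lambda>t. lor e (c + t *\<^sub>R m) < 0) (at_right 0)" by simp
  qed
  have ev2: "eventually (\<lambda>t. t \<in> {0<..<B}) (at_right (0::real))"
    by (rule eventually_at_right_real[OF B0])
  obtain t where t1: "\<forall>e\<in>E. lor e (c + t *\<^sub>R m) < 0" and t2: "t \<in> {0<..<B}"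
    using eventually_happens'[OF _ eventually_conj[OF ev1 ev2]] by auto
  have le0: "lor (c + t *\<^sub>R m) (c + t *\<^sub>R m) \<le> 0"
  proof (cases "c + t *\<^sub>R m = 0")
    case True then show ?thesis by simp
  next
    case False then show ?thesis using cone t1 by force
  qed
  have eq: "lor (c + t *\<^sub>R m) (c + t *\<^sub>R m) = t * (2 * lor c m + t * lor m m)"
    using cc by (simp add: lor_sym[of m c] algebra_simps)
  have X: "2 * lor c m + t * lor m m > 0"
  proof -
    have "t * (\<bar>lor m m\<bar> + 1) < lor c m" using t2 unfolding B_def
      by (simp add: pos_less_divide_eq)
    moreover have "- (t * lor m m) \<le> t * \<bar>lor m m\<bar>" using t2
      by (metis abs_ge_minus_self greaterThanLessThan_iff less_eq_real_def mult_minus_right mult_left_mono)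
    ultimately show ?thesis using t2 cm by (simp add: algebra_simps)
  qed
  have "t * (2 * lor c m + t * lor m m) > 0" using t2 X by simp
  then show False using le0 eq by linarith
qed

lemma affine_root:
  fixes A B s0 :: real
  assumes "s0 < 1" "A * s0 + B < 0" "\<forall>s. s0 \<le> s \<and> s < 1 \<longrightarrow> A * s + B \<noteq> 0"
  shows "A + B \<le> 0"
proof (rule ccontr)
  assume "\<not> A + B \<le> 0"
  then have AB: "A + B > 0" by simp
  have "A * (1 - s0) > 0" using AB assms(2) by (simp add: algebra_simps)
  then have A: "A > 0" using assms(1) by (simp add: zero_less_mult_iff)
  define s where "s = - B / A"
  have "A * s + B = 0" unfolding s_def using A by simp
  moreover have "s0 \<le> s" unfolding s_def using A assms(2) by (simp add: field_simps)
  moreover have "s < 1" unfolding s_def using A AB by (simp add: field_simps)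
  ultimately show False using assms(3) by blast
qed



theorem mainTheorem10:
  fixes E :: "('a::euclidean_space \<times> real) set"
  assumes "DIM('a) \<ge> 2"
    and "polytope_normals E"
    and "coxeter_angles E"
    and "discrete_action (refl_group E)"
    and "strict_fundamental_domain (refl_group E) (polyhedron E)"
  shows "ideal_boundary \<subseteq>
    closure {ray_end \<gamma> | \<gamma> r. r \<in> reflections E \<and> geodesic_ray \<gamma> \<and>
                            (\<forall>t\<ge>0. \<gamma> t \<in> fix_hyperplane r)}"
proof
  fix \<xi> :: "'a \<times> real"
  assume xi: "\<xi> \<in> ideal_boundary"
  have pn: "polytope_normals E" by fact
  have Epos: "\<forall>e\<in>E. lor e e > 0" and fin: "finite E"
    and cone: "{v. \<forall>e\<in>E. lor e v \<le> 0} - {0} \<subseteq> {v. lor v v \<le> 0 \<and> snd v > 0}"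
    using pn by (auto simp: polytope_normals_def)
  define x0 where "x0 = fst \<xi>"
  have s1: "snd \<xi> = 1" and lxx: "lor \<xi> \<xi> = 0" using xi by (auto simp: ideal_boundary_def)
  have xi_eq: "\<xi> = (x0, 1)" using s1 x0_def by (metis prod.collapse)
  have x0x0: "x0 \<bullet> x0 = 1" using lxx s1 unfolding lor_def x0_def by simp
  have nx0: "norm x0 = 1" using x0x0 by (simp add: norm_eq_sqrt_inner)
  show "\<xi> \<in> closure {ray_end \<gamma> | \<gamma> r. r \<in> reflections E \<and> geodesic_ray \<gamma> \<and>
                            (\<forall>t\<ge>0. \<gamma> t \<in> fix_hyperplane r)}"
    unfolding closure_approachable
  proof (intro allI impI)
    fix \<epsilon> :: real assume ep: "\<epsilon> > 0"
    define \<delta> where "\<delta> = min (1/2) (min (\<epsilon>/4) (\<epsilon>^2/8))"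
    have d0: "\<delta> > 0" unfolding \<delta>_def using ep by simp
    have d1: "\<delta> \<le> 1/2" "\<delta> \<le> \<epsilon>/4" "\<delta> \<le> \<epsilon>^2/8" unfolding \<delta>_def by auto
    show "\<exists>y\<in>{ray_end \<gamma> | \<gamma> r. r \<in> reflections E \<and> geodesic_ray \<gamma> \<and>
                            (\<forall>t\<ge>0. \<gamma> t \<in> fix_hyperplane r)}. dist y \<xi> < \<epsilon>"
    proof (cases "\<exists>w e v. w \<in> refl_group E \<and> e \<in> E \<and> v \<in> hyp \<and> lor (w e) v = 0 \<and>
                   norm ((1 / snd v) *\<^sub>R fst v - x0) < \<delta>")
      case True
      then obtain w e v where w: "w \<in> refl_group E" and e: "e \<in> E" and v: "v \<in> hyp"
        and wev: "lor (w e) v = 0" and close: "norm ((1 / snd v) *\<^sub>R fst v - x0) < \<delta>" by blast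
      define n where "n = w e"
      define y where "y = (1 / snd v) *\<^sub>R fst v"
      have sv: "snd v > 0" using v by (simp add: hyp_def)
      have WP: "\<forall>x y. lor (w x) (w y) = lor x y" using W_props[OF w Epos] by simp
      have nn: "lor n n > 0" using WP Epos e unfolding n_def by metis
      have "fst n \<bullet> fst v = snd n * snd v" using wev unfolding n_def lor_def by simp
      then have ay: "fst n \<bullet> y = snd n" unfolding y_def using sv by simp
      have a0: "fst n \<noteq> 0"
      proof
        assume "fst n = 0"
        then have "snd n * snd v = 0" using \<open>fst n \<bullet> fst v = snd n * snd v\<close> by simp
        then have "snd n = 0" using sv by simp
        then have "n = 0" using \<open>fst n = 0\<close> by (simp add: prod_eq_iff)
        then show False using nn by simp
      qed
      have ny: "norm y < 1"
      proof -
        have "norm y = norm (fst v) / snd v" unfolding y_def using sv by simp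
        then show ?thesis using hyp_norm_lt[OF v] sv by simp
      qed
      obtain z where z1: "norm z = 1" and z2: "fst n \<bullet> z = snd n"
        and z3: "(norm (z - y))^2 \<le> 1 - (norm y)^2"
        using caseA_geom[OF assms(1) a0 ay ny] by blast
      define l where "l = (z, 1::real)"
      have zz: "z \<bullet> z = 1" using z1 norm_eq_1 by blast
      have l_ib: "l \<in> ideal_boundary" unfolding l_def ideal_boundary_def lor_def using zz by simp
      have ln: "lor (w e) l = 0" using z2 unfolding l_def lor_def n_def by simp
      have lS: "l \<in> {ray_end \<gamma> | \<gamma> r. r \<in> reflections E \<and> geodesic_ray \<gamma> \<and>
                            (\<forall>t\<ge>0. \<gamma> t \<in> fix_hyperplane r)}"
        by (rule K[OF pn w e l_ib ln])
      have dist_eq: "dist l \<xi> = norm (z - x0)"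
        unfolding l_def xi_eq by (simp add: dist_Pair_Pair dist_norm)
      have yx: "norm (y - x0) < \<delta>" using close unfolding y_def .
      have "1 - norm y \<le> norm (y - x0)"
        using norm_triangle_ineq2[of x0 y] nx0 by (simp add: norm_minus_commute)
      then have "1 - (norm y)^2 \<le> 2 * norm (y - x0)"
      proof -
        assume h: "1 - norm y \<le> norm (y - x0)"
        have "1 - (norm y)^2 = (1 - norm y) * (1 + norm y)" by (simp add: power2_eq_square algebra_simps)
        also have "\<dots> \<le> (1 - norm y) * 2" using ny by (intro mult_left_mono) auto
        also have "\<dots> \<le> 2 * norm (y - x0)" using h by simp
        finally show ?thesis .
      qed
      then have "(norm (z - y))^2 < (\<epsilon>/2)^2" using z3 yx d1(3) by (simp add: power_divide)
      then have zy: "norm (z - y) < \<epsilon>/2" by (rule power2_less_imp_less) (use ep in simp)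
      have "norm (z - x0) \<le> norm (z - y) + norm (y - x0)" using norm_triangle_ineq[of "z - y" "y - x0"] by simp
      then have "dist l \<xi> < \<epsilon>" using dist_eq zy yx d1(2) ep by linarith
      then show ?thesis using lS by blast
    next
      case False
      note noA = False
      define s0 where "s0 = 1 - \<delta>/2"
      have s0: "0 < s0" "s0 < 1" unfolding s0_def using d0 d1 by auto
      define hv where "hv s = (1 / sqrt (1 - s^2)) *\<^sub>R (s *\<^sub>R x0, 1::real)" for s :: real
      have hv: "hv s \<in> hyp" "(1 / snd (hv s)) *\<^sub>R fst (hv s) = s *\<^sub>R x0" if "0 \<le> s" "s < 1" for s
      proof -
        have p: "1 - s^2 > 0" using that by (simp add: abs_square_less_1)
        have sq: "sqrt (1 - s^2) > 0" using p by simp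
        have "lor (hv s) (hv s) = (1 / sqrt (1 - s^2)) * ((1 / sqrt (1 - s^2)) * lor (s *\<^sub>R x0, 1::real) (s *\<^sub>R x0, 1))"
          unfolding hv_def by (simp only: lor_scale_left lor_scale_right)
        also have "lor (s *\<^sub>R x0, 1::real) (s *\<^sub>R x0, 1) = s^2 - 1"
          using x0x0 by (simp add: lor_def power2_eq_square)
        also have "(1 / sqrt (1 - s^2)) * ((1 / sqrt (1 - s^2)) * (s^2 - 1)) = (s^2 - 1) / (sqrt (1 - s^2) * sqrt (1 - s^2))"
          by simp
        also have "sqrt (1 - s^2) * sqrt (1 - s^2) = 1 - s^2" using p by simp
        also have "(s^2 - 1) / (1 - s^2) = -1" using p by (simp add: field_simps)
        finally show "hv s \<in> hyp" unfolding hyp_def using sq by (simp add: hv_def)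
        show "(1 / snd (hv s)) *\<^sub>R fst (hv s) = s *\<^sub>R x0" unfolding hv_def using sq by simp
      qed
      have hvd: "norm (s *\<^sub>R x0 - x0) < \<delta>" if "s0 \<le> s" "s < 1" for s
      proof -
        have "s *\<^sub>R x0 - x0 = (s - 1) *\<^sub>R x0" by (simp add: algebra_simps)
        then have "norm (s *\<^sub>R x0 - x0) = 1 - s" using nx0 that by simp
        then show ?thesis using that s0_def d0 by simp
      qed
      have hvpos: "\<exists>k>0. hv s = k *\<^sub>R (s *\<^sub>R x0, 1)" if "0 \<le> s" "s < 1" for s
      proof -
        have "1 - s^2 > 0" using that by (simp add: abs_square_less_1)
        then show ?thesis unfolding hv_def by (intro exI[of _ "1 / sqrt (1 - s^2)"]) simp
      qed
      obtain q w where w: "w \<in> refl_group E" and wq: "w (hv s0) = q" and q: "q \<in> polyhedron E"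
        using assms(5) hv(1)[of s0] s0 unfolding strict_fundamental_domain_def by force
      have WP: "bij w" "\<forall>x y. lor (w x) (w y) = lor x y" "w 0 = 0" using W_props[OF w Epos] by auto
      have iw: "inv w \<in> refl_group E" by (rule W_inv[OF w Epos])
      have IWP: "\<forall>x y. lor (inv w x) (inv w y) = lor x y" using W_props[OF iw Epos] by auto
      have key: "lor (inv w e) x = lor e (w x)" for e x
      proof -
        have "inv w (w x) = x" using WP(1) by (simp add: bij_is_inj)
        then show ?thesis using IWP by metis
      qed
      have le: "lor e (w \<xi>) \<le> 0" if e: "e \<in> E" for e
      proof -
        define A where "A = lor (inv w e) (x0, 0)"
        define B where "B = lor (inv w e) (0, 1)"
        have g: "lor (inv w e) (s *\<^sub>R x0, 1) = A * s + B" for s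
          unfolding A_def B_def lor_def by (simp add: algebra_simps)
        have nz: "A * s + B \<noteq> 0" if sx: "s0 \<le> s" "s < 1" for s
        proof
          assume "A * s + B = 0"
          have s0': "0 \<le> s" using sx s0 by simp
          obtain k where k: "k > 0" "hv s = k *\<^sub>R (s *\<^sub>R x0, 1)" using hvpos[OF s0' sx(2)] by blast
          have "lor (inv w e) (hv s) = k * lor (inv w e) (s *\<^sub>R x0, 1)"
            unfolding k(2) by (simp only: lor_scale_right)
          then have "lor (inv w e) (hv s) = 0" using g[of s] \<open>A * s + B = 0\<close> by simp
          moreover have "norm ((1 / snd (hv s)) *\<^sub>R fst (hv s) - x0) < \<delta>"
            using hv(2)[OF s0' sx(2)] hvd[OF sx] by simp
          ultimately show False using noA iw e hv(1)[OF s0' sx(2)] by blast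
        qed
        have neg: "A * s0 + B < 0"
        proof -
          obtain k where k: "k > 0" "hv s0 = k *\<^sub>R (s0 *\<^sub>R x0, 1)" using hvpos[of s0] s0 by auto
          have "lor e q \<le> 0" using q e unfolding polyhedron_def by blast
          then have "lor (inv w e) (hv s0) \<le> 0" using key wq by simp
          moreover have "lor (inv w e) (hv s0) = k * lor (inv w e) (s0 *\<^sub>R x0, 1)"
            unfolding k(2) by (simp only: lor_scale_right)
          ultimately have "k * (A * s0 + B) \<le> 0" using g[of s0] by simp
          then have "A * s0 + B \<le> 0" using k by (simp add: mult_le_0_iff)
          moreover have "A * s0 + B \<noteq> 0" using nz[of s0] s0 by simp
          ultimately show ?thesis by simp
        qed
        have "A + B \<le> 0" by (rule affine_root[OF s0(2) neg]) (use nz in blast)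
        then have "lor (inv w e) \<xi> \<le> 0" using g[of 1] xi_eq by simp
        then show ?thesis using key by simp
      qed
      have c0: "w \<xi> \<noteq> 0"
      proof
        assume "w \<xi> = 0"
        then have "w \<xi> = w 0" using WP(3) by simp
        then have "\<xi> = 0" using WP(1) by (simp add: bij_is_inj inj_eq)
        then show False using s1 by simp
      qed
      have cc: "lor (w \<xi>) (w \<xi>) = 0" using WP(2) lxx by metis
      obtain e where e: "e \<in> E" and we: "lor e (w \<xi>) = 0"
        using null_wall[OF fin _ c0 cc cone] le by blast
      have "lor (inv w e) \<xi> = 0" using key we by simp
      then have "\<xi> \<in> {ray_end \<gamma> | \<gamma> r. r \<in> reflections E \<and> geodesic_ray \<gamma> \<and>
                            (\<forall>t\<ge>0. \<gamma> t \<in> fix_hyperplane r)}"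
        by (rule K[OF pn iw e xi])
      then show ?thesis using ep by (intro bexI[where x=\<xi>]) (simp_all only: dist_self)
    qed
  qed
qed

end
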